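(* Fix $q\in[0,1)$. Let $R_n$ be the number of records of $\Pi_n$, where $(\Pi_n)_{n\in\mathbb{N}}$ are coupled through the infinite Bernoulli model. Then $$\frac{R_n-n(1-q)}{\sqrt n\,\log n}\longrightarrow0\quad\text{almost surely};$$ in particular $R_n/n\to1-q$ almost surely.
   Context: Infinite Bernoulli model: $(B_{i,j})_{i,j\ge1}$ independent Bernoulli$(1-q)$, $I_i=\min\{j\notin\{I_1,\dots,I_{i-1}\}:B_{i,j}=1\}$; $\Pi_n$ is the permutation of $\{1,\dots,n\}$ with $\Pi_n(i)=|\{j\le n:I_j\le I_i\}|$. The number of records of $\Pi_n$ is $R_n=|\{j\le n:\Pi_n(j)>\Pi_n(i)\ \forall i<j\}|=|\{j\le n:I_j>I_i\ \forall i<j\}|$. *)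

theory Defs
  imports "HOL-Probability.Probability"
begin

text \<open>A sample point is an array
  \<open>\<omega> :: nat \<times> nat \<Rightarrow> bool\<close>; \<open>\<omega> (i,j)\<close> is \<open>B_{i,j} = 1\<close>. Only indices i,j \<ge> 1 are used.\<close>

definition bern_model :: "real \<Rightarrow> (nat \<times> nat \<Rightarrow> bool) measure" where
  "bern_model q = PiM UNIV (\<lambda>_. measure_pmf (bernoulli_pmf (1 - q)))"

text \<open>\<open>Iseq \<omega> n = [I_1, ..., I_n]\<close>.\<close>
fun Iseq :: "(nat \<times> nat \<Rightarrow> bool) \<Rightarrow> nat \<Rightarrow> nat list" where
  "Iseq \<omega> 0 = []"
| "Iseq \<omega> (Suc n) = Iseq \<omega> n @ [LEAST j. 1 \<le> j \<and> j \<notin> set (Iseq \<omega> n) \<and> \<omega> (Suc n, j)]"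

text \<open>\<open>I_i\<close> for i \<ge> 1.\<close>
definition Ival :: "(nat \<times> nat \<Rightarrow> bool) \<Rightarrow> nat \<Rightarrow> nat" where
  "Ival \<omega> i = last (Iseq \<omega> i)"

definition Perm_n :: "(nat \<times> nat \<Rightarrow> bool) \<Rightarrow> nat \<Rightarrow> nat \<Rightarrow> nat" where
  "Perm_n \<omega> n i = card {j \<in> {1..n}. Ival \<omega> j \<le> Ival \<omega> i}"

definition records :: "(nat \<times> nat \<Rightarrow> bool) \<Rightarrow> nat \<Rightarrow> nat" where
  "records \<omega> n = card {j \<in> {1..n}. \<forall>i \<in> {1..<j}. Perm_n \<omega> n j > Perm_n \<omega> n i}"

end

theory Submission
  imports Defs "HOL-Real_Asymp.Real_Asymp"
begin

abbreviation "B0 q \<equiv> measure_pmf (bernoulli_pmf (1 - q))"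

lemma space_bern[simp]: "space (bern_model q) = UNIV"
  by (simp add: bern_model_def space_PiM)

lemma sets_bern: "sets (bern_model q) = sets (PiM UNIV (\<lambda>_::nat\<times>nat. count_space (UNIV::bool set)))"
  unfolding bern_model_def by (rule sets_PiM_cong) auto

lemma prob_space_bern: "prob_space (bern_model q)"
  unfolding bern_model_def by (intro prob_space_PiM prob_space_measure_pmf)

lemma meas_coord[measurable]: "(\<lambda>\<omega>. \<omega> x) \<in> measurable (bern_model q) (count_space UNIV)"
  using measurable_component_singleton[of x UNIV "\<lambda>_::nat\<times>nat. count_space (UNIV::bool set)"]
  by (simp add: measurable_cong_sets[OF sets_bern refl])


lemma indep_coords:
  fixes q :: real and A B :: "(nat\<times>nat\<Rightarrow>bool) set"
  assumes A: "A \<in> sets (bern_model q)" and B: "B \<in> sets (bern_model q)"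
    and JK: "J \<inter> K = {}"
    and dA: "\<And>\<omega> \<omega>'. (\<forall>x\<in>J. \<omega> x = \<omega>' x) \<Longrightarrow> \<omega> \<in> A \<Longrightarrow> \<omega>' \<in> A"
    and dB: "\<And>\<omega> \<omega>'. (\<forall>x\<in>K. \<omega> x = \<omega>' x) \<Longrightarrow> \<omega> \<in> B \<Longrightarrow> \<omega>' \<in> B"
  shows "measure (bern_model q) (A \<inter> B) = measure (bern_model q) A * measure (bern_model q) B"
proof -
  let ?M = "bern_model q"
  let ?N = "\<lambda>_::nat\<times>nat. B0 q"
  interpret P: prob_space ?M by (rule prob_space_bern)
  interpret PP: product_prob_space ?N UNIV
    by unfold_locales (simp add: prob_space_measure_pmf)
  have rv: "(\<lambda>\<omega>. \<omega> x) \<in> measurable ?M (B0 q)" for x :: "nat \<times> nat"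
    using meas_coord[where q=q and x=x]
    by (subst measurable_cong_sets[OF refl, where N'="count_space UNIV"]) auto
  have ind: "P.indep_vars ?N (\<lambda>x \<omega>. \<omega> x) UNIV"
  proof (subst P.indep_vars_iff_distr_eq_PiM)
    show "distr ?M (PiM UNIV ?N) (\<lambda>\<omega>. \<lambda>x\<in>UNIV. \<omega> x) = PiM UNIV (\<lambda>x. distr ?M (?N x) (\<lambda>\<omega>. \<omega> x))"
    proof -
      have e1: "distr ?M (PiM UNIV ?N) (\<lambda>\<omega>. \<lambda>x\<in>UNIV. \<omega> x) = ?M"
        by (simp add: bern_model_def restrict_UNIV distr_id)
      have e2: "PiM UNIV (\<lambda>x. distr ?M (?N x) (\<lambda>\<omega>. \<omega> x)) = ?M"
        unfolding bern_model_def by (simp add: PP.PiM_component)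
      show ?thesis by (simp only: e1 e2)
    qed
  qed (use rv in auto)
  have iv: "P.indep_var (PiM J ?N) (\<lambda>\<omega>. restrict (\<lambda>x. \<omega> x) J) (PiM K ?N) (\<lambda>\<omega>. restrict (\<lambda>x. \<omega> x) K)"
    by (rule P.indep_var_restrict[OF ind JK]) auto
  define fJ where "fJ = (\<lambda>f::nat\<times>nat\<Rightarrow>bool. \<lambda>x. if x \<in> J then f x else False)"
  define fK where "fK = (\<lambda>f::nat\<times>nat\<Rightarrow>bool. \<lambda>x. if x \<in> K then f x else False)"
  have mfJ: "fJ \<in> measurable (PiM J ?N) ?M"
    unfolding bern_model_def fJ_def
    apply (rule measurable_PiM_single')
    subgoal for i
    proof (cases "i \<in> J")
      case True then show ?thesis
        by (simp only: if_P[OF True] if_True) (rule measurable_component_singleton[OF True])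
    next
      case False then show ?thesis by (simp only: if_not_P[OF False] if_False) simp
    qed
    by simp
  have mfK: "fK \<in> measurable (PiM K ?N) ?M"
    unfolding bern_model_def fK_def
    apply (rule measurable_PiM_single')
    subgoal for i
    proof (cases "i \<in> K")
      case True then show ?thesis
        by (simp only: if_P[OF True] if_True) (rule measurable_component_singleton[OF True])
    next
      case False then show ?thesis by (simp only: if_not_P[OF False] if_False) simp
    qed
    by simp
  define XA where "XA = fJ -` A \<inter> space (PiM J ?N)"
  define XB where "XB = fK -` B \<inter> space (PiM K ?N)"
  have sXA: "XA \<in> sets (PiM J ?N)" unfolding XA_def using mfJ A by (rule measurable_sets)
  have sXB: "XB \<in> sets (PiM K ?N)" unfolding XB_def using mfK B by (rule measurable_sets)
  have eA: "\<omega> \<in> A \<longleftrightarrow> fJ (restrict \<omega> J) \<in> A" for \<omega>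
  proof -
    have h1: "\<forall>x\<in>J. \<omega> x = fJ (restrict \<omega> J) x" and h2: "\<forall>x\<in>J. fJ (restrict \<omega> J) x = \<omega> x"
      by (simp_all add: fJ_def)
    show ?thesis using dA[OF h1] dA[OF h2] by blast
  qed
  have eB: "\<omega> \<in> B \<longleftrightarrow> fK (restrict \<omega> K) \<in> B" for \<omega>
  proof -
    have h1: "\<forall>x\<in>K. \<omega> x = fK (restrict \<omega> K) x" and h2: "\<forall>x\<in>K. fK (restrict \<omega> K) x = \<omega> x"
      by (simp_all add: fK_def)
    show ?thesis using dB[OF h1] dB[OF h2] by blast
  qed
  have 1: "(\<lambda>\<omega>. (restrict (\<lambda>x. \<omega> x) J, restrict (\<lambda>x. \<omega> x) K)) -` (XA \<times> XB) \<inter> space ?M = A \<inter> B"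
    using eA eB by (auto simp: XA_def XB_def space_PiM)
  have 2: "(\<lambda>\<omega>. restrict (\<lambda>x. \<omega> x) J) -` XA \<inter> space ?M = A"
    using eA by (auto simp: XA_def space_PiM)
  have 3: "(\<lambda>\<omega>. restrict (\<lambda>x. \<omega> x) K) -` XB \<inter> space ?M = B"
    using eB by (auto simp: XB_def space_PiM)
  show ?thesis using P.indep_varD[OF iv sXA sXB] unfolding 1 2 3 .
qed


definition nxtv :: "(nat \<times> nat \<Rightarrow> bool) \<Rightarrow> nat \<Rightarrow> nat set \<Rightarrow> nat" where
  "nxtv \<omega> k U = (if \<exists>j. 1 \<le> j \<and> j \<notin> U \<and> \<omega> (k, j) then LEAST j. 1 \<le> j \<and> j \<notin> U \<and> \<omega> (k, j) else 0)"

fun Jl :: "(nat \<times> nat \<Rightarrow> bool) \<Rightarrow> nat \<Rightarrow> nat list" where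
  "Jl \<omega> 0 = []"
| "Jl \<omega> (Suc t) = Jl \<omega> t @ [nxtv \<omega> (Suc t) (set (Jl \<omega> t))]"

definition xv :: "(nat \<times> nat \<Rightarrow> bool) \<Rightarrow> nat \<Rightarrow> nat" where
  "xv \<omega> t = nxtv \<omega> (Suc t) (set (Jl \<omega> t))"

lemma Jl_map: "Jl \<omega> k = map (xv \<omega>) [0..<k]"
proof (induction k)
  case (Suc k)
  have "Jl \<omega> (Suc k) = Jl \<omega> k @ [xv \<omega> k]" by (simp only: Jl.simps xv_def)
  then show ?case using Suc by simp
qed simp

lemma set_Jl: "set (Jl \<omega> k) = xv \<omega> ` {..<k}"
  by (auto simp: Jl_map)

lemma length_Jl[simp]: "length (Jl \<omega> k) = k"
  by (simp add: Jl_map)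

lemma xv_alt: "xv \<omega> t = nxtv \<omega> (Suc t) (xv \<omega> ` {..<t})"
  by (simp only: xv_def set_Jl)

lemma nxtv_pos: "0 < nxtv \<omega> k U \<Longrightarrow> 1 \<le> nxtv \<omega> k U \<and> nxtv \<omega> k U \<notin> U \<and> \<omega> (k, nxtv \<omega> k U)"
proof -
  assume h: "0 < nxtv \<omega> k U"
  have ex: "\<exists>j. 1 \<le> j \<and> j \<notin> U \<and> \<omega> (k, j)"
  proof (rule ccontr)
    assume "\<not> (\<exists>j. 1 \<le> j \<and> j \<notin> U \<and> \<omega> (k, j))"
    then have "nxtv \<omega> k U = 0" unfolding nxtv_def by (rule if_not_P)
    with h show False by simp
  qed
  have eq: "nxtv \<omega> k U = (LEAST j. 1 \<le> j \<and> j \<notin> U \<and> \<omega> (k, j))"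
    unfolding nxtv_def using ex by (rule if_P)
  show ?thesis unfolding eq by (rule LeastI_ex[OF ex])
qed

lemma nxtv_le: "1 \<le> j \<Longrightarrow> j \<notin> U \<Longrightarrow> \<omega> (k, j) \<Longrightarrow> 0 < nxtv \<omega> k U \<and> nxtv \<omega> k U \<le> j"
proof -
  assume h: "1 \<le> j" "j \<notin> U" "\<omega> (k, j)"
  then have ex: "\<exists>j. 1 \<le> j \<and> j \<notin> U \<and> \<omega> (k, j)" by blast
  define L where "L = (LEAST j. 1 \<le> j \<and> j \<notin> U \<and> \<omega> (k, j))"
  have L1: "1 \<le> L"
    using LeastI_ex[OF ex] unfolding L_def by blast
  have L2: "L \<le> j"
    unfolding L_def using h by (intro Least_le) blast
  have eq: "nxtv \<omega> k U = L"
    unfolding nxtv_def L_def using ex by (rule if_P)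
  show ?thesis unfolding eq using L1 L2 by linarith
qed

lemma xv_pos: "0 < xv \<omega> t \<Longrightarrow> 1 \<le> xv \<omega> t \<and> xv \<omega> t \<notin> xv \<omega> ` {..<t} \<and> \<omega> (Suc t, xv \<omega> t)"
proof -
  have eq: "nxtv \<omega> (Suc t) (xv \<omega> ` {..<t}) = xv \<omega> t" by (rule xv_alt[symmetric])
  show "0 < xv \<omega> t \<Longrightarrow> ?thesis" using nxtv_pos[of \<omega> "Suc t" "xv \<omega> ` {..<t}"] unfolding eq .
qed

lemma xv_le: "1 \<le> j \<Longrightarrow> j \<notin> xv \<omega> ` {..<t} \<Longrightarrow> \<omega> (Suc t, j) \<Longrightarrow> 0 < xv \<omega> t \<and> xv \<omega> t \<le> j"
proof -
  have eq: "nxtv \<omega> (Suc t) (xv \<omega> ` {..<t}) = xv \<omega> t" by (rule xv_alt[symmetric])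
  show "1 \<le> j \<Longrightarrow> j \<notin> xv \<omega> ` {..<t} \<Longrightarrow> \<omega> (Suc t, j) \<Longrightarrow> ?thesis"
    using nxtv_le[of j "xv \<omega> ` {..<t}" \<omega> "Suc t"] unfolding eq .
qed

lemma xv_inj: "0 < xv \<omega> t \<Longrightarrow> 0 < xv \<omega> t' \<Longrightarrow> xv \<omega> t = xv \<omega> t' \<Longrightarrow> t = t'"
proof (rule ccontr)
  assume h: "0 < xv \<omega> t" "0 < xv \<omega> t'" "xv \<omega> t = xv \<omega> t'" "t \<noteq> t'"
  show False
  proof (cases "t < t'")
    case True then have "xv \<omega> t \<in> xv \<omega> ` {..<t'}" by auto
    then show False using xv_pos[OF h(2)] h(3) by simp
  next
    case False then have "t' < t" using h(4) by simp
    then have "xv \<omega> t' \<in> xv \<omega> ` {..<t}" by auto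
    then show False using xv_pos[OF h(1)] h(3) by simp
  qed
qed

definition good :: "(nat \<times> nat \<Rightarrow> bool) \<Rightarrow> bool" where
  "good \<omega> \<longleftrightarrow> (\<forall>k N. \<exists>j\<ge>N. \<omega> (k, j))"

lemma good_ex: "good \<omega> \<Longrightarrow> finite U \<Longrightarrow> \<exists>j. 1 \<le> j \<and> j \<notin> U \<and> \<omega> (k, j)"
proof -
  assume g: "good \<omega>" and U: "finite U"
  obtain j where j: "j \<ge> Suc (Max (insert 0 U))" "\<omega> (k, j)" using g unfolding good_def by blast
  have "j \<notin> U"
  proof
    assume "j \<in> U"
    then have "j \<le> Max (insert 0 U)" using U by simp
    then show False using j by simp
  qed
  then show ?thesis using j by (intro exI[of _ j]) auto
qed

lemma good_xv_pos: "good \<omega> \<Longrightarrow> 0 < xv \<omega> t"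
proof -
  assume g: "good \<omega>"
  obtain j where j: "1 \<le> j" "j \<notin> xv \<omega> ` {..<t}" "\<omega> (Suc t, j)"
    using good_ex[OF g, of "xv \<omega> ` {..<t}" "Suc t"] by auto
  show ?thesis using xv_le[OF j] by simp
qed

lemma good_Iseq: "good \<omega> \<Longrightarrow> Iseq \<omega> k = Jl \<omega> k"
proof (induction k)
  case 0 then show ?case by simp
next
  case (Suc k)
  have ex: "\<exists>j. 1 \<le> j \<and> j \<notin> set (Jl \<omega> k) \<and> \<omega> (Suc k, j)"
    using good_ex[OF Suc.prems] by simp
  have eq: "nxtv \<omega> (Suc k) (set (Jl \<omega> k)) = (LEAST j. 1 \<le> j \<and> j \<notin> set (Jl \<omega> k) \<and> \<omega> (Suc k, j))"
    unfolding nxtv_def using ex by (rule if_P)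
  show ?case by (simp only: Iseq.simps Jl.simps Suc.IH[OF Suc.prems] eq)
qed

lemma good_Ival: "good \<omega> \<Longrightarrow> 1 \<le> i \<Longrightarrow> Ival \<omega> i = xv \<omega> (i - 1)"
proof -
  assume g: "good \<omega>" and i: "1 \<le> i"
  then obtain t where t: "i = Suc t" by (cases i) auto
  have "Iseq \<omega> i = Jl \<omega> i" using g by (rule good_Iseq)
  then show ?thesis by (simp add: Ival_def t xv_def del: Iseq.simps)
qed


definition Rc :: "(nat \<times> nat \<Rightarrow> bool) \<Rightarrow> nat \<Rightarrow> nat" where
  "Rc \<omega> n = card {t\<in>{..<n}. \<forall>t'<t. xv \<omega> t' < xv \<omega> t}"

lemma perm_less:
  assumes i: "i \<in> {1..n}" and j: "j \<in> {1..n}"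
  shows "Perm_n \<omega> n i < Perm_n \<omega> n j \<longleftrightarrow> Ival \<omega> i < Ival \<omega> j"
proof -
  define A where "A = (\<lambda>i. {k\<in>{1..n}. Ival \<omega> k \<le> Ival \<omega> i})"
  have PA: "Perm_n \<omega> n i = card (A i)" "Perm_n \<omega> n j = card (A j)"
    by (simp_all add: Perm_n_def A_def)
  have fin: "finite (A x)" for x by (simp add: A_def)
  show ?thesis
  proof
    assume lt: "Ival \<omega> i < Ival \<omega> j"
    have "A i \<subseteq> A j" using lt by (auto simp: A_def)
    moreover have "j \<in> A j" "j \<notin> A i" using j lt by (auto simp: A_def)
    ultimately have "A i \<subset> A j" by blast
    then show "Perm_n \<omega> n i < Perm_n \<omega> n j" unfolding PA by (intro psubset_card_mono fin)
  next
    assume h: "Perm_n \<omega> n i < Perm_n \<omega> n j"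
    show "Ival \<omega> i < Ival \<omega> j"
    proof (rule ccontr)
      assume "\<not> Ival \<omega> i < Ival \<omega> j"
      then have "A j \<subseteq> A i" by (auto simp: A_def)
      then have "card (A j) \<le> card (A i)" by (intro card_mono fin)
      then show False using h unfolding PA by simp
    qed
  qed
qed

lemma good_records: "good \<omega> \<Longrightarrow> records \<omega> n = Rc \<omega> n"
proof -
  assume g: "good \<omega>"
  have IV: "Ival \<omega> (Suc t) = xv \<omega> t" for t using good_Ival[OF g, of "Suc t"] by simp
  have eq: "{j\<in>{1..n}. \<forall>i\<in>{1..<j}. Perm_n \<omega> n j > Perm_n \<omega> n i}
      = Suc ` {t\<in>{..<n}. \<forall>t'<t. xv \<omega> t' < xv \<omega> t}"
  proof (intro set_eqI iffI)
    fix x assume "x \<in> {j\<in>{1..n}. \<forall>i\<in>{1..<j}. Perm_n \<omega> n j > Perm_n \<omega> n i}"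
    then have x: "x \<in> {1..n}" "\<And>i. i \<in> {1..<x} \<Longrightarrow> Perm_n \<omega> n i < Perm_n \<omega> n x" by auto
    obtain t where t: "x = Suc t" using x(1) by (cases x) auto
    have "xv \<omega> t' < xv \<omega> t" if "t' < t" for t'
    proof -
      have "Suc t' \<in> {1..<x}" "Suc t' \<in> {1..n}" using that t x(1) by auto
      then have "Ival \<omega> (Suc t') < Ival \<omega> x" using x(2) perm_less[OF _ x(1)] by blast
      then show ?thesis by (simp add: IV t)
    qed
    then show "x \<in> Suc ` {t\<in>{..<n}. \<forall>t'<t. xv \<omega> t' < xv \<omega> t}" using t x(1) by auto
  next
    fix x assume "x \<in> Suc ` {t\<in>{..<n}. \<forall>t'<t. xv \<omega> t' < xv \<omega> t}"
    then obtain t where t: "x = Suc t" "t < n" "\<And>t'. t' < t \<Longrightarrow> xv \<omega> t' < xv \<omega> t" by auto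
    have "Perm_n \<omega> n i < Perm_n \<omega> n x" if i1: "i \<in> {1..<x}" for i
    proof -
      obtain t' where t': "i = Suc t'" using i1 by (cases i) auto
      have "i \<in> {1..n}" "x \<in> {1..n}" using i1 t by auto
      moreover have "Ival \<omega> i < Ival \<omega> x" using t i1 by (simp add: IV t')
      ultimately show ?thesis using perm_less by blast
    qed
    then show "x \<in> {j\<in>{1..n}. \<forall>i\<in>{1..<j}. Perm_n \<omega> n j > Perm_n \<omega> n i}" using t by auto
  qed
  show ?thesis unfolding records_def Rc_def eq by (simp add: card_image)
qed

definition Ev :: "nat \<Rightarrow> nat \<Rightarrow> (nat \<times> nat \<Rightarrow> bool) \<Rightarrow> bool" where
  "Ev m i \<omega> \<longleftrightarrow> (\<forall>t<i. 0 < xv \<omega> t \<and> xv \<omega> t < m) \<and> \<not> (0 < xv \<omega> i \<and> xv \<omega> i < m)"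

definition RV :: "(nat \<times> nat \<Rightarrow> bool) \<Rightarrow> nat \<Rightarrow> bool" where
  "RV \<omega> m \<longleftrightarrow> (\<exists>i. xv \<omega> i = m \<and> (\<forall>t<i. 0 < xv \<omega> t \<and> xv \<omega> t < m))"

definition Sc :: "(nat \<times> nat \<Rightarrow> bool) \<Rightarrow> nat \<Rightarrow> nat" where
  "Sc \<omega> N = card {m\<in>{1..N}. RV \<omega> m}"

lemma Ev_ex: "0 < m \<Longrightarrow> \<exists>i<m. Ev m i \<omega>"
proof -
  assume m: "0 < m"
  have ex: "\<exists>t<m. \<not> (0 < xv \<omega> t \<and> xv \<omega> t < m)"
  proof (rule ccontr)
    assume "\<not> ?thesis"
    then have all: "\<And>t. t < m \<Longrightarrow> 0 < xv \<omega> t \<and> xv \<omega> t < m" by blast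
    have "inj_on (xv \<omega>) {..<m}"
      by (rule inj_onI) (use all xv_inj in auto)
    moreover have "xv \<omega> ` {..<m} \<subseteq> {1..<m}" using all by force
    ultimately have "card {..<m} \<le> card {1..<m}" by (intro card_inj_on_le) auto
    then show False using m by simp
  qed
  define i where "i = (LEAST t. \<not> (0 < xv \<omega> t \<and> xv \<omega> t < m))"
  obtain t0 where t0: "t0 < m" "\<not> (0 < xv \<omega> t0 \<and> xv \<omega> t0 < m)" using ex by blast
  have "i \<le> t0" unfolding i_def using t0(2) by (rule Least_le)
  moreover have "\<not> (0 < xv \<omega> i \<and> xv \<omega> i < m)" unfolding i_def using t0(2) by (rule LeastI)
  moreover have "0 < xv \<omega> t \<and> xv \<omega> t < m" if "t < i" for t
    using not_less_Least[OF that[unfolded i_def]] by blast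
  ultimately show ?thesis using t0(1) by (intro exI[of _ i]) (auto simp: Ev_def)
qed

lemma Ev_uniq: "Ev m i \<omega> \<Longrightarrow> Ev m i' \<omega> \<Longrightarrow> i = i'"
  unfolding Ev_def by (metis linorder_neqE_nat)

lemma RV_Ev: "0 < m \<Longrightarrow> Ev m i \<omega> \<Longrightarrow> RV \<omega> m \<longleftrightarrow> \<omega> (Suc i, m)"
proof
  assume m: "0 < m" and E: "Ev m i \<omega>" and "RV \<omega> m"
  then obtain i' where i': "xv \<omega> i' = m" "\<forall>t<i'. 0 < xv \<omega> t \<and> xv \<omega> t < m"
    unfolding RV_def by blast
  have "Ev m i' \<omega>" using i' unfolding Ev_def by simp
  then have ii: "i' = i" using Ev_uniq[OF E] by simp
  have "0 < xv \<omega> i" using i' m ii by simp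
  from xv_pos[OF this] show "\<omega> (Suc i, m)" using i' ii by simp
next
  assume m: "0 < m" and E: "Ev m i \<omega>" and w: "\<omega> (Suc i, m)"
  have nin: "m \<notin> xv \<omega> ` {..<i}" using E unfolding Ev_def by force
  have "0 < xv \<omega> i \<and> xv \<omega> i \<le> m" using xv_le[of m \<omega> i] m nin w by simp
  then have xi: "xv \<omega> i = m" using E unfolding Ev_def by auto
  show "RV \<omega> m" unfolding RV_def using xi E unfolding Ev_def by blast
qed

definition tr :: "nat \<Rightarrow> nat \<Rightarrow> nat" where
  "tr m v = (if 0 < v \<and> v < m then v else 0)"

lemma nxtv_tr:
  "tr m (nxtv \<omega> k U) = (if \<exists>j. 1 \<le> j \<and> j < m \<and> j \<notin> U \<and> \<omega> (k, j)
      then LEAST j. 1 \<le> j \<and> j < m \<and> j \<notin> U \<and> \<omega> (k, j) else 0)"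
proof (cases "\<exists>j. 1 \<le> j \<and> j < m \<and> j \<notin> U \<and> \<omega> (k, j)")
  case True
  then obtain j where j: "1 \<le> j" "j < m" "j \<notin> U" "\<omega> (k, j)" by blast
  have le: "0 < nxtv \<omega> k U \<and> nxtv \<omega> k U \<le> j" using nxtv_le[of j U \<omega> k, OF j(1,3,4)] .
  have P: "1 \<le> nxtv \<omega> k U \<and> nxtv \<omega> k U \<notin> U \<and> \<omega> (k, nxtv \<omega> k U)" using nxtv_pos le by blast
  have trv: "tr m (nxtv \<omega> k U) = nxtv \<omega> k U" using le j(2) by (simp add: tr_def)
  have "(LEAST j. 1 \<le> j \<and> j < m \<and> j \<notin> U \<and> \<omega> (k, j)) = nxtv \<omega> k U"
  proof (rule Least_equality)
    show "1 \<le> nxtv \<omega> k U \<and> nxtv \<omega> k U < m \<and> nxtv \<omega> k U \<notin> U \<and> \<omega> (k, nxtv \<omega> k U)"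
      using P le j(2) by simp
    fix y assume "1 \<le> y \<and> y < m \<and> y \<notin> U \<and> \<omega> (k, y)"
    then show "nxtv \<omega> k U \<le> y" using nxtv_le[of y U \<omega> k] by blast
  qed
  then show ?thesis using True trv by simp
next
  case False
  have "tr m (nxtv \<omega> k U) = 0"
  proof (rule ccontr)
    assume "tr m (nxtv \<omega> k U) \<noteq> 0"
    then have h: "0 < nxtv \<omega> k U" "nxtv \<omega> k U < m" by (auto simp: tr_def split: if_splits)
    then show False using nxtv_pos[OF h(1)] False by blast
  qed
  then show ?thesis unfolding if_not_P[OF False] .
qed

lemma tr_det:
  assumes ag: "\<And>a c. c < m \<Longrightarrow> \<omega> (a, c) = \<omega>' (a, c)"
  shows "tr m (xv \<omega> t) = tr m (xv \<omega>' t)"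
proof (induction t rule: less_induct)
  case (less t)
  have trj: "0 < j \<Longrightarrow> j < m \<Longrightarrow> tr m v = j \<longleftrightarrow> v = j" for v j by (auto simp: tr_def)
  have U: "j \<in> xv \<omega> ` {..<t} \<longleftrightarrow> j \<in> xv \<omega>' ` {..<t}" if "1 \<le> j" "j < m" for j
  proof -
    have "j \<in> xv \<omega> ` {..<t} \<longleftrightarrow> (\<exists>t'<t. tr m (xv \<omega> t') = j)" using trj[of j] that by auto
    also have "\<dots> \<longleftrightarrow> (\<exists>t'<t. tr m (xv \<omega>' t') = j)" using less.IH by auto
    also have "\<dots> \<longleftrightarrow> j \<in> xv \<omega>' ` {..<t}" using trj[of j] that by auto
    finally show ?thesis .
  qed
  have pe: "(\<lambda>j. 1 \<le> j \<and> j < m \<and> j \<notin> xv \<omega> ` {..<t} \<and> \<omega> (Suc t, j))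
          = (\<lambda>j. 1 \<le> j \<and> j < m \<and> j \<notin> xv \<omega>' ` {..<t} \<and> \<omega>' (Suc t, j))"
    using U ag by (intro ext) blast
  have "tr m (xv \<omega> t) = (if Ex (\<lambda>j. 1 \<le> j \<and> j < m \<and> j \<notin> xv \<omega> ` {..<t} \<and> \<omega> (Suc t, j))
      then Least (\<lambda>j. 1 \<le> j \<and> j < m \<and> j \<notin> xv \<omega> ` {..<t} \<and> \<omega> (Suc t, j)) else 0)"
    unfolding xv_alt[of \<omega> t] by (rule nxtv_tr)
  also have "\<dots> = (if Ex (\<lambda>j. 1 \<le> j \<and> j < m \<and> j \<notin> xv \<omega>' ` {..<t} \<and> \<omega>' (Suc t, j))
      then Least (\<lambda>j. 1 \<le> j \<and> j < m \<and> j \<notin> xv \<omega>' ` {..<t} \<and> \<omega>' (Suc t, j)) else 0)"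
    by (simp only: pe)
  also have "\<dots> = tr m (xv \<omega>' t)"
    unfolding xv_alt[of \<omega>' t] by (rule nxtv_tr[symmetric])
  finally show ?case .
qed

lemma pos_lt_tr: "m' \<le> m \<Longrightarrow> (0 < v \<and> v < m') \<longleftrightarrow> (0 < tr m v \<and> tr m v < m')"
  by (auto simp: tr_def)

lemma eq_tr: "0 < m' \<Longrightarrow> m' < m \<Longrightarrow> v = m' \<longleftrightarrow> tr m v = m'"
  by (auto simp: tr_def)

lemma Ev_det:
  assumes ag: "\<And>a c. c < m \<Longrightarrow> \<omega> (a, c) = \<omega>' (a, c)"
  shows "Ev m i \<omega> \<longleftrightarrow> Ev m i \<omega>'"
proof -
  have key: "(0 < xv \<omega> t \<and> xv \<omega> t < m) \<longleftrightarrow> (0 < xv \<omega>' t \<and> xv \<omega>' t < m)" for t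
    using pos_lt_tr[of m m "xv \<omega> t"] pos_lt_tr[of m m "xv \<omega>' t"]
      tr_det[where m=m and \<omega>=\<omega> and \<omega>'=\<omega>' and t=t, OF ag] by simp
  show ?thesis unfolding Ev_def using key by blast
qed

lemma RV_det:
  assumes ag: "\<And>a c. c < m \<Longrightarrow> \<omega> (a, c) = \<omega>' (a, c)" and m': "0 < m'" "m' < m"
  shows "RV \<omega> m' \<longleftrightarrow> RV \<omega>' m'"
proof -
  have key: "(0 < xv \<omega> t \<and> xv \<omega> t < m') \<longleftrightarrow> (0 < xv \<omega>' t \<and> xv \<omega>' t < m')" for t
    using pos_lt_tr[of m' m "xv \<omega> t"] pos_lt_tr[of m' m "xv \<omega>' t"] m'
      tr_det[where m=m and \<omega>=\<omega> and \<omega>'=\<omega>' and t=t, OF ag] by simp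
  have key2: "xv \<omega> t = m' \<longleftrightarrow> xv \<omega>' t = m'" for t
    using eq_tr[OF m', of "xv \<omega> t"] eq_tr[OF m', of "xv \<omega>' t"]
      tr_det[where m=m and \<omega>=\<omega> and \<omega>'=\<omega>' and t=t, OF ag] by simp
  show ?thesis unfolding RV_def using key key2 by blast
qed

lemma Sc_det:
  assumes ag: "\<And>a c. c < Suc N \<Longrightarrow> \<omega> (a, c) = \<omega>' (a, c)"
  shows "Sc \<omega> N = Sc \<omega>' N"
proof -
  have "{m\<in>{1..N}. RV \<omega> m} = {m\<in>{1..N}. RV \<omega>' m}"
    using RV_det[where m="Suc N" and \<omega>=\<omega> and \<omega>'=\<omega>', OF ag] by auto
  then show ?thesis by (simp add: Sc_def)
qed

lemma Sc_Suc:
  assumes E: "Ev (Suc N) i \<omega>"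
  shows "Sc \<omega> (Suc N) = Sc \<omega> N + (if \<omega> (Suc i, Suc N) then 1 else 0)"
proof -
  have RV: "RV \<omega> (Suc N) \<longleftrightarrow> \<omega> (Suc i, Suc N)" using RV_Ev[OF _ E] by simp
  have "{m\<in>{1..Suc N}. RV \<omega> m} = {m\<in>{1..N}. RV \<omega> m} \<union> (if RV \<omega> (Suc N) then {Suc N} else {})"
    by (auto simp: le_Suc_eq)
  then show ?thesis unfolding Sc_def RV by (auto simp: card_insert_if)
qed

lemma nxtv_row_cong: "(\<And>c. \<omega> (k, c) = \<omega>' (k, c)) \<Longrightarrow> nxtv \<omega> k U = nxtv \<omega>' k U"
  unfolding nxtv_def by presburger

lemma Jl_det_rows:
  assumes ag: "\<And>a c. a \<le> j \<Longrightarrow> \<omega> (a, c) = \<omega>' (a, c)"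
  shows "Jl \<omega> j = Jl \<omega>' j"
  using ag
proof (induction j)
  case 0 then show ?case by simp
next
  case (Suc j)
  have "Jl \<omega> j = Jl \<omega>' j" using Suc by simp
  moreover have "nxtv \<omega> (Suc j) U = nxtv \<omega>' (Suc j) U" for U
    by (rule nxtv_row_cong) (use Suc.prems in simp)
  ultimately show ?case by (simp only: Jl.simps)
qed


definition Mx :: "(nat \<times> nat \<Rightarrow> bool) \<Rightarrow> nat \<Rightarrow> nat" where
  "Mx \<omega> n = Max (xv \<omega> ` {..<n})"

lemma good_inj: "good \<omega> \<Longrightarrow> inj_on (xv \<omega>) A"
  by (rule inj_onI) (use xv_inj good_xv_pos in blast)

lemma Mx_ge: "good \<omega> \<Longrightarrow> n \<le> Mx \<omega> n"
proof (cases "n = 0")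
  case True then show ?thesis by simp
next
  case False
  assume g: "good \<omega>"
  have "xv \<omega> ` {..<n} \<subseteq> {1..Mx \<omega> n}"
  proof
    fix v assume v: "v \<in> xv \<omega> ` {..<n}"
    then have "v \<le> Mx \<omega> n" unfolding Mx_def by (intro Max_ge) auto
    moreover have "1 \<le> v" using v good_xv_pos[OF g] by (auto simp: Suc_le_eq)
    ultimately show "v \<in> {1..Mx \<omega> n}" by simp
  qed
  then have "card {..<n} \<le> card {1..Mx \<omega> n}"
    by (intro card_inj_on_le[OF good_inj[OF g]]) auto
  then show ?thesis by simp
qed

lemma Mx_in: "0 < n \<Longrightarrow> \<exists>j<n. Mx \<omega> n = xv \<omega> j"
proof -
  assume "0 < n"
  then have "Mx \<omega> n \<in> xv \<omega> ` {..<n}" unfolding Mx_def by (intro Max_in) auto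
  then show ?thesis by auto
qed

lemma Mx_upper: "j < n \<Longrightarrow> xv \<omega> j \<le> Mx \<omega> n"
  unfolding Mx_def by (intro Max_ge) auto

lemma Rc_Sc:
  assumes g: "good \<omega>" and n: "0 < n"
  shows "Rc \<omega> n = Sc \<omega> (Mx \<omega> n)"
proof -
  define R where "R = {t\<in>{..<n}. \<forall>t'<t. xv \<omega> t' < xv \<omega> t}"
  define V where "V = {m\<in>{1..Mx \<omega> n}. RV \<omega> m}"
  have pos: "\<And>t. 0 < xv \<omega> t" using good_xv_pos[OF g] .
  have "xv \<omega> ` R = V"
  proof (intro set_eqI iffI)
    fix m assume "m \<in> xv \<omega> ` R"
    then obtain t where t: "t < n" "\<And>t'. t' < t \<Longrightarrow> xv \<omega> t' < xv \<omega> t" "m = xv \<omega> t"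
      unfolding R_def by blast
    have "1 \<le> m" using pos[of t] t(3) by simp
    moreover have "m \<le> Mx \<omega> n" using Mx_upper[OF t(1)] t(3) by simp
    moreover have "RV \<omega> m" unfolding RV_def using t pos by blast
    ultimately show "m \<in> V" unfolding V_def by simp
  next
    fix m assume "m \<in> V"
    then have m: "m \<le> Mx \<omega> n" "RV \<omega> m" unfolding V_def by auto
    then obtain i where i: "xv \<omega> i = m" "\<And>t. t < i \<Longrightarrow> 0 < xv \<omega> t \<and> xv \<omega> t < m"
      unfolding RV_def by blast
    have "i < n"
    proof (rule ccontr)
      assume "\<not> i < n"
      obtain j where j: "j < n" "Mx \<omega> n = xv \<omega> j" using Mx_in[OF n] by blast
      then have "xv \<omega> j < m" using i(2)[of j] \<open>\<not> i < n\<close> by simp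
      then show False using m(1) j(2) by simp
    qed
    then have "i \<in> R" unfolding R_def using i by simp
    then show "m \<in> xv \<omega> ` R" using i(1) by blast
  qed
  then have "card V = card R" using card_image[OF good_inj[OF g, of R]] by simp
  then show ?thesis unfolding Rc_def Sc_def R_def V_def by simp
qed

lemma Mx_gap:
  assumes "0 < n"
  shows "\<exists>j<n. Mx \<omega> n - n \<le> xv \<omega> j - Suc j"
proof -
  obtain j where j: "j < n" "Mx \<omega> n = xv \<omega> j" using Mx_in[OF assms] by blast
  then show ?thesis by (intro exI[of _ j]) auto
qed

definition ffc :: "nat set \<Rightarrow> nat \<Rightarrow> nat" where
  "ffc U L = (LEAST c. L \<le> card ({1..<c} - U))"

definition FF :: "nat set \<Rightarrow> nat \<Rightarrow> nat set" where
  "FF U L = {1..<ffc U L} - U"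

lemma finite_FF[simp]: "finite (FF U L)"
  by (simp add: FF_def)

lemma card_gap: "finite U \<Longrightarrow> c - 1 - card U \<le> card ({1..<c} - U)"
  using diff_card_le_card_Diff[of U "{1..<c}"] by simp

lemma FF_card: "finite U \<Longrightarrow> L \<le> card (FF U L)"
proof -
  assume U: "finite U"
  have ex: "L \<le> card ({1..<L + card U + 1} - U)" using card_gap[OF U, of "L + card U + 1"] by simp
  show ?thesis unfolding FF_def ffc_def by (rule LeastI[of "\<lambda>c. L \<le> card ({1..<c} - U)", OF ex])
qed

lemma FF_sub: "L \<le> card ({1..<c} - U) \<Longrightarrow> FF U L \<subseteq> {1..<c} - U"
proof -
  assume h: "L \<le> card ({1..<c} - U)"
  have "ffc U L \<le> c" unfolding ffc_def by (rule Least_le[of "\<lambda>c. L \<le> card ({1..<c} - U)", OF h])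
  then show ?thesis unfolding FF_def by auto
qed

definition Zev :: "nat \<Rightarrow> nat \<Rightarrow> (nat \<times> nat \<Rightarrow> bool) \<Rightarrow> bool" where
  "Zev j L \<omega> \<longleftrightarrow> (\<forall>y\<in>FF (set (Jl \<omega> j)) L. \<not> \<omega> (Suc j, y))"

lemma Z_of_gap:
  assumes g: "good \<omega>" and L: "L \<le> xv \<omega> j - Suc j"
  shows "Zev j L \<omega>"
proof -
  define U where "U = set (Jl \<omega> j)"
  have U: "finite U" "card U \<le> j" unfolding U_def using card_length[of "Jl \<omega> j"] by auto
  have "L \<le> xv \<omega> j - 1 - card U" using L U(2) by linarith
  also have "\<dots> \<le> card ({1..<xv \<omega> j} - U)" by (rule card_gap[OF U(1)])
  finally have sub: "FF U L \<subseteq> {1..<xv \<omega> j} - U" by (rule FF_sub)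
  have "\<not> \<omega> (Suc j, y)" if y: "y \<in> FF U L" for y
  proof
    assume w: "\<omega> (Suc j, y)"
    have y1: "1 \<le> y" "y \<notin> xv \<omega> ` {..<j}" "y < xv \<omega> j" using sub y unfolding U_def set_Jl by auto
    have "xv \<omega> j \<le> y" using xv_le[OF y1(1,2) w] by simp
    then show False using y1(3) by simp
  qed
  then show ?thesis unfolding Zev_def U_def by blast
qed


lemma meas_nxtv[measurable]: "(\<lambda>\<omega>. nxtv \<omega> k U) \<in> measurable (bern_model q) (count_space UNIV)"
  unfolding nxtv_def by measurable

lemma meas_Jl[measurable]: "(\<lambda>\<omega>. Jl \<omega> t) \<in> measurable (bern_model q) (count_space UNIV)"
proof (induction t)
  case 0 then show ?case by simp
next
  case (Suc t)
  have "(\<lambda>\<omega>. (\<lambda>l \<omega>. l @ [nxtv \<omega> (Suc t) (set l)]) (Jl \<omega> t) \<omega>) \<in> measurable (bern_model q) (count_space UNIV)"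
  proof (rule measurable_compose_countable[OF _ Suc.IH])
    fix l :: "nat list"
    show "(\<lambda>\<omega>. l @ [nxtv \<omega> (Suc t) (set l)]) \<in> measurable (bern_model q) (count_space UNIV)"
      by (rule measurable_compose[OF meas_nxtv]) simp
  qed
  then show ?case by simp
qed

lemma meas_xv[measurable]: "(\<lambda>\<omega>. xv \<omega> t) \<in> measurable (bern_model q) (count_space UNIV)"
proof -
  have "(\<lambda>\<omega>. (\<lambda>l \<omega>. nxtv \<omega> (Suc t) (set l)) (Jl \<omega> t) \<omega>) \<in> measurable (bern_model q) (count_space UNIV)"
    by (rule measurable_compose_countable[OF _ meas_Jl]) (rule meas_nxtv)
  then show ?thesis by (simp add: xv_def)
qed

lemma meas_Ev[measurable]: "Measurable.pred (bern_model q) (Ev m i)"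
  unfolding Ev_def by measurable

lemma meas_RV[measurable]: "Measurable.pred (bern_model q) (\<lambda>\<omega>. RV \<omega> m)"
  unfolding RV_def by measurable

lemma Sc_Suc': "Sc \<omega> (Suc N) = Sc \<omega> N + (if RV \<omega> (Suc N) then 1 else 0)"
proof -
  have "{m\<in>{1..Suc N}. RV \<omega> m} = {m\<in>{1..N}. RV \<omega> m} \<union> (if RV \<omega> (Suc N) then {Suc N} else {})"
    by (auto simp: le_Suc_eq)
  then show ?thesis unfolding Sc_def by (auto simp: card_insert_if)
qed

lemma meas_Sc[measurable]: "(\<lambda>\<omega>. Sc \<omega> N) \<in> measurable (bern_model q) (count_space UNIV)"
proof (induction N)
  case 0 then show ?case by (simp add: Sc_def)
next
  case (Suc N)
  have "(\<lambda>\<omega>. (\<lambda>k \<omega>. k + (if RV \<omega> (Suc N) then 1 else 0)) (Sc \<omega> N) \<omega>) \<in> measurable (bern_model q) (count_space UNIV)"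
    by (rule measurable_compose_countable[OF _ Suc.IH]) measurable
  then show ?case by (simp add: Sc_Suc')
qed

lemma meas_Zev[measurable]: "Measurable.pred (bern_model q) (Zev j L)"
proof -
  have "Measurable.pred (bern_model q) (\<lambda>\<omega>. (\<lambda>l \<omega>. \<forall>y\<in>FF (set l) L. \<not> \<omega> (Suc j, y)) (Jl \<omega> j) \<omega>)"
    by (rule measurable_compose_countable[OF _ meas_Jl]) measurable
  then show ?thesis unfolding Zev_def[abs_def] by simp
qed

lemma meas_good[measurable]: "Measurable.pred (bern_model q) good"
  unfolding good_def by measurable


lemma setsI: "Measurable.pred (bern_model q) P \<Longrightarrow> {\<omega>. P \<omega>} \<in> sets (bern_model q)"
  using pred_def[where M="bern_model q" and P=P] by simp

lemma emeasure_all_false: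
  assumes q: "0 \<le> q" "q \<le> 1" and F: "finite F"
  shows "emeasure (bern_model q) {\<omega>. \<forall>x\<in>F. \<not> \<omega> x} = ennreal (q ^ card F)"
proof -
  interpret PP: product_prob_space "\<lambda>_::nat\<times>nat. B0 q" UNIV
    by unfold_locales (simp add: prob_space_measure_pmf)
  have "{\<omega>. \<forall>x\<in>F. \<not> \<omega> x} = {\<omega>\<in>space (PiM UNIV (\<lambda>_. B0 q)). \<forall>x\<in>F. \<omega> x \<in> {False}}"
    by (auto simp: space_PiM)
  moreover have "emeasure (PiM UNIV (\<lambda>_. B0 q)) {\<omega>\<in>space (PiM UNIV (\<lambda>_. B0 q)). \<forall>x\<in>F. \<omega> x \<in> {False}}
      = (\<Prod>x\<in>F. emeasure (B0 q) {False})"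
    by (rule PP.emeasure_PiM_Collect) (use F in auto)
  ultimately have "emeasure (bern_model q) {\<omega>. \<forall>x\<in>F. \<not> \<omega> x} = (\<Prod>x\<in>F. emeasure (B0 q) {False})"
    unfolding bern_model_def by simp
  also have "\<dots> = (\<Prod>x\<in>F. ennreal q)"
    using q by (simp add: emeasure_pmf_single)
  also have "\<dots> = ennreal (q ^ card F)"
    using q by (simp add: prod_ennreal ennreal_power)
  finally show ?thesis .
qed

lemma emeasure_single:
  assumes q: "0 \<le> q" "q \<le> 1"
  shows "emeasure (bern_model q) {\<omega>. \<omega> x} = ennreal (1 - q)"
proof -
  interpret PP: product_prob_space "\<lambda>_::nat\<times>nat. B0 q" UNIV
    by unfold_locales (simp add: prob_space_measure_pmf)
  have "{\<omega>. \<omega> x} = {\<omega>\<in>space (PiM UNIV (\<lambda>_. B0 q)). \<forall>y\<in>{x}. \<omega> y \<in> {True}}"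
    by (auto simp: space_PiM)
  moreover have "emeasure (PiM UNIV (\<lambda>_. B0 q)) {\<omega>\<in>space (PiM UNIV (\<lambda>_. B0 q)). \<forall>y\<in>{x}. \<omega> y \<in> {True}}
      = (\<Prod>y\<in>{x}. emeasure (B0 q) {True})"
    by (rule PP.emeasure_PiM_Collect) auto
  ultimately have "emeasure (bern_model q) {\<omega>. \<omega> x} = (\<Prod>y\<in>{x}. emeasure (B0 q) {True})"
    unfolding bern_model_def by simp
  also have "\<dots> = ennreal (1 - q)"
    using q by (simp add: emeasure_pmf_single)
  finally show ?thesis .
qed

lemma measure_single:
  assumes q: "0 \<le> q" "q \<le> 1"
  shows "measure (bern_model q) {\<omega>. \<omega> x} = 1 - q" "measure (bern_model q) {\<omega>. \<not> \<omega> x} = q"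
proof -
  show "measure (bern_model q) {\<omega>. \<omega> x} = 1 - q"
    using emeasure_single[OF q, of x] q by (simp add: measure_def)
  have "emeasure (bern_model q) {\<omega>. \<forall>y\<in>{x}. \<not> \<omega> y} = ennreal q"
    using emeasure_all_false[OF q, of "{x}"] by simp
  then show "measure (bern_model q) {\<omega>. \<not> \<omega> x} = q"
    using q by (simp add: measure_def)
qed

lemma partition_Ev:
  assumes m: "0 < m" and A: "A \<in> sets (bern_model q)"
  shows "measure (bern_model q) A = (\<Sum>i<m. measure (bern_model q) (A \<inter> {\<omega>. Ev m i \<omega>}))"
proof -
  interpret P: prob_space "bern_model q" by (rule prob_space_bern)
  have "A = (\<Union>i\<in>{..<m}. A \<inter> {\<omega>. Ev m i \<omega>})"
    using Ev_ex[OF m] by blast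
  then have "measure (bern_model q) A = measure (bern_model q) (\<Union>i\<in>{..<m}. A \<inter> {\<omega>. Ev m i \<omega>})"
    by simp
  also have "\<dots> = (\<Sum>i<m. measure (bern_model q) (A \<inter> {\<omega>. Ev m i \<omega>}))"
  proof (rule measure_finite_Union)
    show "(\<lambda>i. A \<inter> {\<omega>. Ev m i \<omega>}) ` {..<m} \<subseteq> sets (bern_model q)"
      using A by (auto intro!: sets.Int setsI)
    show "disjoint_family_on (\<lambda>i. A \<inter> {\<omega>. Ev m i \<omega>}) {..<m}"
      unfolding disjoint_family_on_def using Ev_uniq by blast
  qed (auto simp: P.emeasure_eq_measure)
  finally show ?thesis .
qed

lemma binom_rec:
  assumes p: "0 \<le> p" "p \<le> 1"
  shows "pmf (binomial_pmf (Suc N) p) k =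
    (1 - p) * pmf (binomial_pmf N p) k + p * (if k = 0 then 0 else pmf (binomial_pmf N p) (k - 1))"
proof (cases k)
  case 0 then show ?thesis using p by simp
next
  case (Suc k')
  show ?thesis
  proof (cases "k' < N")
    case True
    then have e: "N - k' = Suc (N - Suc k')" by simp
    show ?thesis using p unfolding Suc by (simp add: e binomial_Suc_Suc algebra_simps)
  next
    case False
    then have "N choose Suc k' = 0" by simp
    moreover have "N - k' = 0 \<or> N = k'" using False by auto
    ultimately show ?thesis using p unfolding Suc by (auto simp: binomial_Suc_Suc algebra_simps)
  qed
qed


lemma indep_step:
  assumes q: "0 \<le> q" "q \<le> 1"
  shows "measure (bern_model q) ({\<omega>. Sc \<omega> N = k \<and> Ev (Suc N) i \<omega>} \<inter> {\<omega>. \<omega> (Suc i, Suc N) = b})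
    = measure (bern_model q) {\<omega>. Sc \<omega> N = k \<and> Ev (Suc N) i \<omega>} * (if b then 1 - q else q)"
proof -
  have B: "measure (bern_model q) {\<omega>. \<omega> (Suc i, Suc N) = b} = (if b then 1 - q else q)"
    using measure_single[OF q, of "(Suc i, Suc N)"] by (cases b) simp_all
  have "measure (bern_model q) ({\<omega>. Sc \<omega> N = k \<and> Ev (Suc N) i \<omega>} \<inter> {\<omega>. \<omega> (Suc i, Suc N) = b})
     = measure (bern_model q) {\<omega>. Sc \<omega> N = k \<and> Ev (Suc N) i \<omega>} * measure (bern_model q) {\<omega>. \<omega> (Suc i, Suc N) = b}"
  proof (rule indep_coords[where J="{(a, c). c < Suc N}" and K="{(Suc i, Suc N)}"])
    show "{\<omega>. Sc \<omega> N = k \<and> Ev (Suc N) i \<omega>} \<in> sets (bern_model q)" by (rule setsI) measurable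
    show "{\<omega>. \<omega> (Suc i, Suc N) = b} \<in> sets (bern_model q)" by (rule setsI) measurable
    show "{(a, c). c < Suc N} \<inter> {(Suc i, Suc N)} = {}" by auto
  next
    fix \<omega> \<omega>' :: "nat \<times> nat \<Rightarrow> bool"
    assume ag: "\<forall>x\<in>{(a, c). c < Suc N}. \<omega> x = \<omega>' x" and w: "\<omega> \<in> {\<omega>. Sc \<omega> N = k \<and> Ev (Suc N) i \<omega>}"
    have ag': "\<And>a c. c < Suc N \<Longrightarrow> \<omega> (a, c) = \<omega>' (a, c)" using ag by auto
    show "\<omega>' \<in> {\<omega>. Sc \<omega> N = k \<and> Ev (Suc N) i \<omega>}"
      using w Sc_det[where N=N and \<omega>=\<omega> and \<omega>'=\<omega>', OF ag'] Ev_det[where m="Suc N" and \<omega>=\<omega> and \<omega>'=\<omega>', OF ag'] by simp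
  next
    fix \<omega> \<omega>' :: "nat \<times> nat \<Rightarrow> bool"
    assume "\<forall>x\<in>{(Suc i, Suc N)}. \<omega> x = \<omega>' x" "\<omega> \<in> {\<omega>. \<omega> (Suc i, Suc N) = b}"
    then show "\<omega>' \<in> {\<omega>. \<omega> (Suc i, Suc N) = b}" by simp
  qed
  then show ?thesis using B by simp
qed

lemma law_Sc:
  assumes q: "0 \<le> q" "q \<le> 1"
  shows "measure (bern_model q) {\<omega>. Sc \<omega> N = k} = pmf (binomial_pmf N (1 - q)) k"
proof (induction N arbitrary: k)
  case 0
  interpret P: prob_space "bern_model q" by (rule prob_space_bern)
  have "Sc \<omega> 0 = 0" for \<omega> by (simp add: Sc_def)
  then show ?case using q P.prob_space by (cases k) simp_all
next
  case (Suc N)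
  interpret P: prob_space "bern_model q" by (rule prob_space_bern)
  let ?M = "bern_model q"
  define E where "E = (\<lambda>i. {\<omega>. Ev (Suc N) i \<omega>})"
  have sE: "E i \<in> sets ?M" for i unfolding E_def by (rule setsI) measurable
  have sS: "{\<omega>. Sc \<omega> n = k'} \<in> sets ?M" for n k' by (rule setsI) measurable
  have trm: "measure ?M ({\<omega>. Sc \<omega> (Suc N) = k} \<inter> E i)
      = q * measure ?M ({\<omega>. Sc \<omega> N = k} \<inter> E i) + (1 - q) * measure ?M ({\<omega>. Sc \<omega> N + 1 = k} \<inter> E i)"
    for i
  proof -
    have split: "{\<omega>. Sc \<omega> (Suc N) = k} \<inter> E i =
       ({\<omega>. Sc \<omega> N = k \<and> Ev (Suc N) i \<omega>} \<inter> {\<omega>. \<omega> (Suc i, Suc N) = False}) \<union>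
       ({\<omega>. Sc \<omega> N = k - 1 \<and> 0 < k \<and> Ev (Suc N) i \<omega>} \<inter> {\<omega>. \<omega> (Suc i, Suc N) = True})"
      unfolding E_def using Sc_Suc by auto
    have s1: "{\<omega>. Sc \<omega> N = k \<and> Ev (Suc N) i \<omega>} \<inter> {\<omega>. \<omega> (Suc i, Suc N) = False} \<in> sets ?M"
      by (rule sets.Int; rule setsI; measurable)
    have s2: "{\<omega>. Sc \<omega> N = k - 1 \<and> 0 < k \<and> Ev (Suc N) i \<omega>} \<inter> {\<omega>. \<omega> (Suc i, Suc N) = True} \<in> sets ?M"
      by (rule sets.Int; rule setsI; measurable)
    have "measure ?M ({\<omega>. Sc \<omega> (Suc N) = k} \<inter> E i) =
        measure ?M ({\<omega>. Sc \<omega> N = k \<and> Ev (Suc N) i \<omega>} \<inter> {\<omega>. \<omega> (Suc i, Suc N) = False}) +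
        measure ?M ({\<omega>. Sc \<omega> N = k - 1 \<and> 0 < k \<and> Ev (Suc N) i \<omega>} \<inter> {\<omega>. \<omega> (Suc i, Suc N) = True})"
      unfolding split by (rule P.finite_measure_Union[OF s1 s2]) auto
    also have "measure ?M ({\<omega>. Sc \<omega> N = k \<and> Ev (Suc N) i \<omega>} \<inter> {\<omega>. \<omega> (Suc i, Suc N) = False})
        = q * measure ?M ({\<omega>. Sc \<omega> N = k} \<inter> E i)"
      using indep_step[OF q, of N k i False] unfolding E_def by (simp add: Collect_conj_eq)
    also have "measure ?M ({\<omega>. Sc \<omega> N = k - 1 \<and> 0 < k \<and> Ev (Suc N) i \<omega>} \<inter> {\<omega>. \<omega> (Suc i, Suc N) = True})
        = (1 - q) * measure ?M ({\<omega>. Sc \<omega> N + 1 = k} \<inter> E i)"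
    proof (cases k)
      case 0 then show ?thesis by simp
    next
      case (Suc k')
      then have "{\<omega>. Sc \<omega> N + 1 = k} = {\<omega>. Sc \<omega> N = k'}" by auto
      then show ?thesis using indep_step[OF q, of N k' i True] unfolding E_def Suc
        by (simp add: Collect_conj_eq)
    qed
    finally show ?thesis .
  qed
  have "measure ?M {\<omega>. Sc \<omega> (Suc N) = k} = (\<Sum>i<Suc N. measure ?M ({\<omega>. Sc \<omega> (Suc N) = k} \<inter> E i))"
    unfolding E_def by (rule partition_Ev) (simp_all add: sS)
  also have "\<dots> = q * (\<Sum>i<Suc N. measure ?M ({\<omega>. Sc \<omega> N = k} \<inter> E i))
      + (1 - q) * (\<Sum>i<Suc N. measure ?M ({\<omega>. Sc \<omega> N + 1 = k} \<inter> E i))"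
    by (simp only: trm sum.distrib sum_distrib_left)
  also have "(\<Sum>i<Suc N. measure ?M ({\<omega>. Sc \<omega> N = k} \<inter> E i)) = measure ?M {\<omega>. Sc \<omega> N = k}"
    unfolding E_def by (rule partition_Ev[symmetric]) (simp_all add: sS)
  also have "(\<Sum>i<Suc N. measure ?M ({\<omega>. Sc \<omega> N + 1 = k} \<inter> E i)) = measure ?M {\<omega>. Sc \<omega> N + 1 = k}"
    unfolding E_def by (rule partition_Ev[symmetric]) (simp_all, rule setsI, measurable)
  also have "measure ?M {\<omega>. Sc \<omega> N + 1 = k} = (if k = 0 then 0 else pmf (binomial_pmf N (1 - q)) (k - 1))"
  proof (cases k)
    case 0 then show ?thesis by simp
  next
    case (Suc k')
    then have "{\<omega>. Sc \<omega> N + 1 = k} = {\<omega>. Sc \<omega> N = k'}" by auto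
    then show ?thesis using Suc.IH[of k'] Suc by simp
  qed
  finally show ?case using binom_rec[of "1 - q" N k] q Suc.IH[of k] by simp
qed


lemma prob_Sc:
  assumes q: "0 \<le> q" "q \<le> 1"
  shows "measure (bern_model q) {\<omega>. Sc \<omega> N \<in> X} = measure_pmf.prob (binomial_pmf N (1 - q)) X"
proof -
  interpret P: prob_space "bern_model q" by (rule prob_space_bern)
  let ?D = "distr (bern_model q) (count_space UNIV) (\<lambda>\<omega>. Sc \<omega> N)"
  have D: "?D = measure_pmf (binomial_pmf N (1 - q))"
  proof (rule measure_eqI_countable[where A=UNIV])
    fix a :: nat
    have "emeasure ?D {a} = emeasure (bern_model q) {\<omega>. Sc \<omega> N = a}"
      by (subst emeasure_distr) (auto intro: meas_Sc simp: vimage_def)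
    also have "\<dots> = ennreal (pmf (binomial_pmf N (1 - q)) a)"
      using law_Sc[OF q, of N a] by (simp add: P.emeasure_eq_measure)
    also have "\<dots> = emeasure (measure_pmf (binomial_pmf N (1 - q))) {a}"
      by (simp add: emeasure_pmf_single)
    finally show "emeasure ?D {a} = emeasure (measure_pmf (binomial_pmf N (1 - q))) {a}" .
  qed auto
  have "measure (bern_model q) {\<omega>. Sc \<omega> N \<in> X} = measure ?D X"
    by (subst measure_distr) (auto intro: meas_Sc simp: vimage_def)
  then show ?thesis using D by simp
qed

lemma tail_Sc:
  assumes q: "0 \<le> q" "q \<le> 1" and N: "0 < N" and e: "0 \<le> \<epsilon>"
  shows "measure (bern_model q) {\<omega>. \<epsilon> \<le> \<bar>real (Sc \<omega> N) - real N * (1 - q)\<bar>} \<le> 2 * exp (- 2 * \<epsilon>\<^sup>2 / real N)"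
proof -
  have bd: "binomial_distribution (1 - q)" by unfold_locales (use q in auto)
  have "measure (bern_model q) {\<omega>. \<epsilon> \<le> \<bar>real (Sc \<omega> N) - real N * (1 - q)\<bar>}
      = measure_pmf.prob (binomial_pmf N (1 - q)) {x. \<epsilon> \<le> \<bar>real x - real N * (1 - q)\<bar>}"
    using prob_Sc[OF q, of N "{x. \<epsilon> \<le> \<bar>real x - real N * (1 - q)\<bar>}"] by simp
  also have "\<dots> \<le> 2 * exp (- 2 * \<epsilon>\<^sup>2 / real N)"
    by (rule binomial_distribution.prob_abs_ge[OF bd N e])
  finally show ?thesis .
qed

lemma summable_exp_ln2:
  assumes c: "0 < c"
  shows "summable (\<lambda>N::nat. 2 * exp (- c * (ln (real N))\<^sup>2))"
proof (rule summable_comparison_test_bigo)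
  show "summable (\<lambda>n::nat. norm (inverse (real n ^ 2)))"
    using inverse_power_summable[of 2, where 'a=real] by simp
  show "(\<lambda>N::nat. 2 * exp (- c * (ln (real N))\<^sup>2)) \<in> O(\<lambda>n. inverse (real n ^ 2))"
    using c by real_asymp
qed

lemma AE_Sc:
  assumes q: "0 \<le> q" "q \<le> 1" and e: "0 < \<epsilon>"
  shows "AE \<omega> in bern_model q. eventually (\<lambda>N. \<bar>real (Sc \<omega> N) - real N * (1 - q)\<bar> < \<epsilon> * sqrt (real N) * ln (real N)) sequentially"
proof -
  interpret P: prob_space "bern_model q" by (rule prob_space_bern)
  define A where "A = (\<lambda>N. {\<omega>. \<epsilon> * sqrt (real N) * ln (real N) \<le> \<bar>real (Sc \<omega> N) - real N * (1 - q)\<bar>})"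
  have sA: "A N \<in> sets (bern_model q)" for N unfolding A_def by (rule setsI) measurable
  have bd: "measure (bern_model q) (A N) \<le> 2 * exp (- (2 * \<epsilon>\<^sup>2) * (ln (real N))\<^sup>2)" if N: "1 \<le> N" for N
  proof -
    have nn: "0 \<le> \<epsilon> * sqrt (real N) * ln (real N)" using e N by simp
    have "measure (bern_model q) (A N) \<le> 2 * exp (- 2 * (\<epsilon> * sqrt (real N) * ln (real N))\<^sup>2 / real N)"
      unfolding A_def by (rule tail_Sc[OF q _ nn]) (use N in simp)
    also have "- 2 * (\<epsilon> * sqrt (real N) * ln (real N))\<^sup>2 / real N = - (2 * \<epsilon>\<^sup>2) * (ln (real N))\<^sup>2"
      using N by (simp add: power_mult_distrib field_simps)
    finally show ?thesis .
  qed
  have sum: "summable (\<lambda>N. measure (bern_model q) (A N))"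
  proof (rule summable_comparison_test')
    show "summable (\<lambda>N::nat. 2 * exp (- (2 * \<epsilon>\<^sup>2) * (ln (real N))\<^sup>2))"
      by (rule summable_exp_ln2) (use e in simp)
    show "norm (measure (bern_model q) (A N)) \<le> 2 * exp (- (2 * \<epsilon>\<^sup>2) * (ln (real N))\<^sup>2)" if "1 \<le> N" for N
      using bd[OF that] by simp
  qed
  have "AE \<omega> in bern_model q. eventually (\<lambda>N. \<omega> \<in> space (bern_model q) - A N) sequentially"
    by (rule borel_cantelli_AE1[OF sA _ sum]) (simp add: P.emeasure_eq_measure)
  then show ?thesis
    by (rule AE_mp) (auto simp: A_def elim!: eventually_mono)
qed


lemma sets_all_false: "finite F \<Longrightarrow> {\<omega>. \<forall>x\<in>F. \<not> \<omega> x} \<in> sets (bern_model q)"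
  by (rule setsI, rule pred_intros_finite(3), assumption, measurable)

lemma measure_Zev:
  assumes q: "0 \<le> q" "q \<le> 1"
  shows "measure (bern_model q) {\<omega>. Zev j L \<omega>} \<le> q ^ L"
proof -
  interpret P: prob_space "bern_model q" by (rule prob_space_bern)
  let ?M = "bern_model q"
  define X where "X = (\<lambda>l. {\<omega>. Jl \<omega> j = l} \<inter> {\<omega>. \<forall>y\<in>FF (set l) L. \<not> \<omega> (Suc j, y)})"
  have sX: "X l \<in> sets ?M" for l unfolding X_def by (rule sets.Int; rule setsI; measurable)
  have sJ: "{\<omega>. Jl \<omega> j = l} \<in> sets ?M" for l by (rule setsI) measurable
  have eqZ: "{\<omega>. Zev j L \<omega>} = \<Union> (X ` UNIV)" unfolding X_def Zev_def by auto
  have dX: "disjoint_family_on X UNIV" unfolding disjoint_family_on_def X_def by auto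
  have dJ: "disjoint_family_on (\<lambda>l. {\<omega>. Jl \<omega> j = l}) UNIV" unfolding disjoint_family_on_def by auto
  have eX: "emeasure ?M (X l) \<le> emeasure ?M {\<omega>. Jl \<omega> j = l} * ennreal (q ^ L)" for l
  proof -
    define F where "F = (\<lambda>y. (Suc j, y)) ` FF (set l) L"
    have cF: "card F = card (FF (set l) L)" unfolding F_def by (rule card_image) (auto simp: inj_on_def)
    have fF: "finite F" unfolding F_def by simp
    have B: "{\<omega>. \<forall>y\<in>FF (set l) L. \<not> \<omega> (Suc j, y)} = {\<omega>. \<forall>x\<in>F. \<not> \<omega> x}" unfolding F_def by auto
    have mB: "measure ?M {\<omega>. \<forall>x\<in>F. \<not> \<omega> x} = q ^ card F"
      using emeasure_all_false[OF q fF] q by (simp add: P.emeasure_eq_measure)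
    have "measure ?M (X l) = measure ?M {\<omega>. Jl \<omega> j = l} * measure ?M {\<omega>. \<forall>x\<in>F. \<not> \<omega> x}"
      unfolding X_def B
    proof (rule indep_coords[where J="{(a, c). a \<le> j}" and K="{(a, c). a = Suc j}"])
      show "{\<omega>. Jl \<omega> j = l} \<in> sets ?M" by (rule sJ)
      show "{\<omega>. \<forall>x\<in>F. \<not> \<omega> x} \<in> sets ?M" by (rule sets_all_false[OF fF])
      show "{(a, c). a \<le> j} \<inter> {(a, c). a = Suc j} = {}" by auto
    next
      fix \<omega> \<omega>' :: "nat \<times> nat \<Rightarrow> bool"
      assume ag: "\<forall>x\<in>{(a, c). a \<le> j}. \<omega> x = \<omega>' x" and w: "\<omega> \<in> {\<omega>. Jl \<omega> j = l}"
      have "Jl \<omega> j = Jl \<omega>' j" by (rule Jl_det_rows) (use ag in auto)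
      then show "\<omega>' \<in> {\<omega>. Jl \<omega> j = l}" using w by simp
    next
      fix \<omega> \<omega>' :: "nat \<times> nat \<Rightarrow> bool"
      assume ag: "\<forall>x\<in>{(a, c). a = Suc j}. \<omega> x = \<omega>' x" and w: "\<omega> \<in> {\<omega>. \<forall>x\<in>F. \<not> \<omega> x}"
      have "F \<subseteq> {(a, c). a = Suc j}" unfolding F_def by auto
      then show "\<omega>' \<in> {\<omega>. \<forall>x\<in>F. \<not> \<omega> x}" using ag w by auto
    qed
    also have "\<dots> \<le> measure ?M {\<omega>. Jl \<omega> j = l} * q ^ L"
    proof (rule mult_left_mono)
      have "L \<le> card F" using cF FF_card[of "set l" L] by simp
      then show "measure ?M {\<omega>. \<forall>x\<in>F. \<not> \<omega> x} \<le> q ^ L" unfolding mB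
        using q by (intro power_decreasing) auto
    qed simp
    finally show ?thesis using q by (simp add: P.emeasure_eq_measure ennreal_mult[symmetric])
  qed
  have "emeasure ?M {\<omega>. Zev j L \<omega>} = (\<integral>\<^sup>+ l. emeasure ?M (X l) \<partial>count_space UNIV)"
    unfolding eqZ by (rule emeasure_UN_countable) (use sX dX in auto)
  also have "\<dots> \<le> (\<integral>\<^sup>+ l. emeasure ?M {\<omega>. Jl \<omega> j = l} * ennreal (q ^ L) \<partial>count_space UNIV)"
    by (rule nn_integral_mono) (rule eX)
  also have "\<dots> = (\<integral>\<^sup>+ l. emeasure ?M {\<omega>. Jl \<omega> j = l} \<partial>count_space UNIV) * ennreal (q ^ L)"
    by (rule nn_integral_multc) (simp add: measurable_count_space_eq1)
  also have "(\<integral>\<^sup>+ l. emeasure ?M {\<omega>. Jl \<omega> j = l} \<partial>count_space UNIV) = emeasure ?M (\<Union>l. {\<omega>. Jl \<omega> j = l})"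
    by (rule emeasure_UN_countable[symmetric]) (use sJ dJ in auto)
  also have "(\<Union>l. {\<omega>. Jl \<omega> j = l}) = space ?M" by auto
  also have "emeasure ?M (space ?M) = 1" by (rule P.emeasure_space_1)
  finally have "emeasure ?M {\<omega>. Zev j L \<omega>} \<le> ennreal (q ^ L)" by simp
  then show ?thesis using q by (simp add: P.emeasure_eq_measure)
qed

definition Lf :: "real \<Rightarrow> nat \<Rightarrow> nat" where
  "Lf q j = nat \<lceil>2 * ln (real j + 1) / (- ln q)\<rceil> + 1"

lemma Lf_mono: "0 \<le> q \<Longrightarrow> q < 1 \<Longrightarrow> j \<le> j' \<Longrightarrow> Lf q j \<le> Lf q j'"
proof -
  assume q: "0 \<le> q" "q < 1" and j: "j \<le> j'"
  have "0 \<le> - ln q"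
  proof (cases "q = 0")
    case False then show ?thesis using q by simp
  qed simp
  then have "2 * ln (real j + 1) / (- ln q) \<le> 2 * ln (real j' + 1) / (- ln q)"
    using j by (intro divide_right_mono) auto
  then show ?thesis unfolding Lf_def by (intro add_right_mono nat_mono ceiling_mono)
qed

lemma Lf_bound: "0 \<le> q \<Longrightarrow> q < 1 \<Longrightarrow> real (Lf q j) \<le> 2 / (- ln q) * ln (real j + 1) + 2"
proof -
  assume q: "0 \<le> q" "q < 1"
  have nn: "0 \<le> 2 * ln (real j + 1) / (- ln q)"
  proof (cases "q = 0")
    case False then show ?thesis using q by (intro divide_nonneg_nonneg) auto
  qed simp
  have "real (nat \<lceil>2 * ln (real j + 1) / (- ln q)\<rceil>) = real_of_int \<lceil>2 * ln (real j + 1) / (- ln q)\<rceil>"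
    using nn by simp
  also have "\<dots> \<le> 2 * ln (real j + 1) / (- ln q) + 1" by linarith
  finally show ?thesis unfolding Lf_def by simp
qed

lemma qL_bound:
  assumes q: "0 \<le> q" "q < 1"
  shows "q ^ Lf q j \<le> inverse ((real j + 1)\<^sup>2)"
proof (cases "q = 0")
  case True then show ?thesis by (simp add: Lf_def)
next
  case False
  then have q0: "0 < q" using q by simp
  define a where "a = - ln q"
  have a: "0 < a" unfolding a_def using q0 q by simp
  define y where "y = real j + 1"
  have y: "1 \<le> y" unfolding y_def by simp
  have L: "2 * ln y / a \<le> real (Lf q j)"
    unfolding Lf_def a_def y_def by linarith
  have "q ^ Lf q j = exp (real (Lf q j) * ln q)"
    using q0 by (simp add: exp_of_nat_mult)
  also have "real (Lf q j) * ln q = - (a * real (Lf q j))" unfolding a_def by simp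
  also have "a * real (Lf q j) \<ge> 2 * ln y"
    using mult_left_mono[OF L, of a] a by simp
  then have "exp (- (a * real (Lf q j))) \<le> exp (- (2 * ln y))" by simp
  also have "exp (- (2 * ln y)) = inverse (y\<^sup>2)"
    using y by (simp add: exp_minus exp_of_nat_mult[of 2, simplified])
  finally show ?thesis unfolding y_def .
qed

lemma AE_Z:
  assumes q: "0 \<le> q" "q < 1"
  shows "AE \<omega> in bern_model q. eventually (\<lambda>j. \<not> Zev j (Lf q j) \<omega>) sequentially"
proof -
  interpret P: prob_space "bern_model q" by (rule prob_space_bern)
  define A where "A = (\<lambda>j. {\<omega>. Zev j (Lf q j) \<omega>})"
  have sA: "A j \<in> sets (bern_model q)" for j unfolding A_def by (rule setsI) measurable
  have sum: "summable (\<lambda>j. measure (bern_model q) (A j))"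
  proof (rule summable_comparison_test')
    have "summable (\<lambda>n. inverse (real n ^ 2))" using inverse_power_summable[of 2, where 'a=real] by simp
    then have "summable (\<lambda>n. inverse (real (n + 1) ^ 2))" by (rule summable_ignore_initial_segment)
    then show "summable (\<lambda>j. inverse ((real j + 1)\<^sup>2))" by (simp add: add.commute)
    show "norm (measure (bern_model q) (A j)) \<le> inverse ((real j + 1)\<^sup>2)" for j
      using measure_Zev[of q j "Lf q j"] qL_bound[OF q, of j] q unfolding A_def by simp
  qed
  have "AE \<omega> in bern_model q. eventually (\<lambda>j. \<omega> \<in> space (bern_model q) - A j) sequentially"
    by (rule borel_cantelli_AE1[OF sA _ sum]) (simp add: P.emeasure_eq_measure)
  then show ?thesis
    by (rule AE_mp) (auto simp: A_def elim!: eventually_mono)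
qed

lemma AE_good:
  assumes q: "0 \<le> q" "q < 1"
  shows "AE \<omega> in bern_model q. good \<omega>"
proof -
  interpret P: prob_space "bern_model q" by (rule prob_space_bern)
  have row: "AE \<omega> in bern_model q. \<exists>j\<ge>N. \<omega> (k, j)" for k N
  proof -
    define S where "S = {\<omega>. \<forall>j\<ge>N. \<not> \<omega> (k, j)}"
    have sS: "S \<in> sets (bern_model q)" unfolding S_def by (rule setsI) measurable
    have bd: "measure (bern_model q) S \<le> q ^ L" for L
    proof -
      define F where "F = (\<lambda>j. (k, j)) ` {N..<N + L}"
      have fF: "finite F" and cF: "card F = L" unfolding F_def
        by (simp_all add: card_image inj_on_def)
      have "S \<subseteq> {\<omega>. \<forall>x\<in>F. \<not> \<omega> x}" unfolding S_def F_def by auto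
      then have "measure (bern_model q) S \<le> measure (bern_model q) {\<omega>. \<forall>x\<in>F. \<not> \<omega> x}"
        by (intro P.finite_measure_mono sets_all_false[OF fF])
      also have "\<dots> = q ^ L" using emeasure_all_false[OF q(1) _ fF] q cF by (simp add: P.emeasure_eq_measure)
      finally show ?thesis .
    qed
    have "(\<lambda>L. q ^ L) \<longlonglongrightarrow> 0" using q by (intro LIMSEQ_power_zero) simp
    then have "measure (bern_model q) S \<le> 0"
      by (rule LIMSEQ_le_const) (use bd in auto)
    then have "emeasure (bern_model q) S = 0"
      by (simp add: P.emeasure_eq_measure measure_nonneg antisym)
    then show ?thesis
      by (subst AE_iff_measurable[OF sS]) (auto simp: S_def)
  qed
  show ?thesis unfolding good_def
    by (subst AE_all_countable, intro allI, subst AE_all_countable, intro allI) (rule row)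
qed


lemma det_main:
  fixes q :: real
  assumes q: "0 \<le> q" "q < 1"
    and g: "good \<omega>"
    and S: "\<And>k. eventually (\<lambda>N. \<bar>real (Sc \<omega> N) - real N * (1 - q)\<bar> < (1 / real (Suc k)) * sqrt (real N) * ln (real N)) sequentially"
    and Z: "eventually (\<lambda>j. \<not> Zev j (Lf q j) \<omega>) sequentially"
  shows "(\<lambda>n. (real (records \<omega> n) - real n * (1 - q)) / (sqrt (real n) * ln (real n))) \<longlonglongrightarrow> 0"
proof -
  obtain j0 where j0: "\<And>j. j \<ge> j0 \<Longrightarrow> \<not> Zev j (Lf q j) \<omega>"
    using Z unfolding eventually_sequentially by blast
  define C0 where "C0 = (\<Sum>j<j0. xv \<omega> j - Suc j)"
  have gapj: "xv \<omega> j - Suc j \<le> C0 + Lf q j" for j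
  proof (cases "j < j0")
    case True
    then have "xv \<omega> j - Suc j \<le> C0" unfolding C0_def
      by (intro member_le_sum[of j "{..<j0}" "\<lambda>j. xv \<omega> j - Suc j"]) auto
    then show ?thesis by simp
  next
    case False
    then have "\<not> Lf q j \<le> xv \<omega> j - Suc j" using j0[of j] Z_of_gap[OF g] by auto
    then show ?thesis by simp
  qed
  have D: "Mx \<omega> n - n \<le> C0 + Lf q n" if n: "0 < n" for n
  proof -
    obtain j where j: "j < n" "Mx \<omega> n - n \<le> xv \<omega> j - Suc j" using Mx_gap[OF n] by blast
    have "Lf q j \<le> Lf q n" using Lf_mono[OF q, of j n] j(1) by simp
    then show ?thesis using j(2) gapj[of j] by simp
  qed
  define a where "a = 2 / (- ln q)"
  have a0: "0 \<le> a"
  proof (cases "q = 0")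
    case False then show ?thesis unfolding a_def using q by (intro divide_nonneg_nonneg) auto
  qed (simp add: a_def)
  define K where "K = real C0 + a + 2"
  have K0: "0 \<le> K" unfolding K_def using a0 by simp
  have DK: "real (Mx \<omega> n) - real n \<le> K * (ln (real n + 1) + 1)" if n: "0 < n" for n
  proof -
    have l0: "0 \<le> ln (real n + 1)" by simp
    have "real (Mx \<omega> n) - real n = real (Mx \<omega> n - n)" using Mx_ge[OF g, of n] by simp
    also have "\<dots> \<le> real C0 + real (Lf q n)" using D[OF n] by linarith
    also have "\<dots> \<le> real C0 + a * ln (real n + 1) + 2" using Lf_bound[OF q, of n] unfolding a_def by simp
    also have "\<dots> \<le> K * (ln (real n + 1) + 1)" unfolding K_def using l0 a0
      by (simp add: algebra_simps mult_nonneg_nonneg)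
    finally show ?thesis .
  qed
  have lim1: "(\<lambda>n::nat. (ln (real n + 1) + 1) / (sqrt (real n) * ln (real n))) \<longlonglongrightarrow> 0"
    by real_asymp
  have lim2: "(\<lambda>n::nat. (ln (real n + 1) + 1) / real n) \<longlonglongrightarrow> 0"
    by real_asymp
  have lim1K: "(\<lambda>n::nat. K * ((ln (real n + 1) + 1) / (sqrt (real n) * ln (real n)))) \<longlonglongrightarrow> 0"
    using tendsto_mult_right_zero[OF lim1, of K] .
  have lim2K: "(\<lambda>n::nat. K * ((ln (real n + 1) + 1) / real n)) \<longlonglongrightarrow> 0"
    using tendsto_mult_right_zero[OF lim2, of K] .
  show ?thesis unfolding LIMSEQ_iff
  proof (intro allI impI)
    fix r :: real assume r: "0 < r"
    obtain k where k: "inverse (real (Suc k)) < r / 8" using reals_Archimedean[of "r / 8"] r by auto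
    define e where "e = 1 / real (Suc k)"
    have e: "0 < e" "e < r / 8" using k by (simp_all add: e_def inverse_eq_divide)
    obtain N0 where N0: "\<And>N. N \<ge> N0 \<Longrightarrow> \<bar>real (Sc \<omega> N) - real N * (1 - q)\<bar> < e * sqrt (real N) * ln (real N)"
      using S[of k] unfolding eventually_sequentially e_def by blast
    have ev1: "eventually (\<lambda>n. K * ((ln (real n + 1) + 1) / (sqrt (real n) * ln (real n))) < r / 2) sequentially"
      by (rule order_tendstoD(2)[OF lim1K]) (use r in simp)
    have ev2: "eventually (\<lambda>n. K * ((ln (real n + 1) + 1) / real n) < 1) sequentially"
      using order_tendstoD(2)[OF lim2K] by simp
    obtain n1 where n1: "\<And>n. n \<ge> n1 \<Longrightarrow> K * ((ln (real n + 1) + 1) / (sqrt (real n) * ln (real n))) < r / 2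
        \<and> K * ((ln (real n + 1) + 1) / real n) < 1"
      using eventually_conj[OF ev1 ev2] unfolding eventually_sequentially by blast
    show "\<exists>no. \<forall>n\<ge>no. norm ((real (records \<omega> n) - real n * (1 - q)) / (sqrt (real n) * ln (real n)) - 0) < r"
    proof (intro exI allI impI)
      fix n assume nn: "max (max n1 N0) 2 \<le> n"
      then have n2: "2 \<le> n" and nn1: "n1 \<le> n" and nN0: "N0 \<le> n" by auto
      define m where "m = Mx \<omega> n"
      define sn where "sn = sqrt (real n) * ln (real n)"
      have n0: "0 < n" using n2 by simp
      have rn: "2 \<le> real n" using n2 by simp
      have lnn: "0 < ln (real n)" using rn by simp
      have sn0: "0 < sn" unfolding sn_def using rn lnn by simp
      have mn: "n \<le> m" unfolding m_def by (rule Mx_ge[OF g])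
      have rmn: "real n \<le> real m" using mn by simp
      have h1: "K * (ln (real n + 1) + 1) < r / 2 * sn"
        using n1[OF nn1] sn0 unfolding sn_def by (simp add: divide_less_eq mult.commute)
      have h2: "K * (ln (real n + 1) + 1) < real n"
        using n1[OF nn1] rn by (simp add: divide_less_eq)
      have dm: "real m - real n \<le> K * (ln (real n + 1) + 1)" unfolding m_def by (rule DK[OF n0])
      have m2: "real m \<le> 2 * real n" using dm h2 by linarith
      have sc: "\<bar>real (Sc \<omega> m) - real m * (1 - q)\<bar> < e * sqrt (real m) * ln (real m)"
        using N0[of m] nN0 mn by simp
      have sm: "sqrt (real m) * ln (real m) \<le> 4 * sn"
      proof -
        have "sqrt (real m) \<le> sqrt (2 * real n)" using m2 by simp
        also have "\<dots> = sqrt 2 * sqrt (real n)" by (simp add: real_sqrt_mult)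
        also have "\<dots> \<le> 2 * sqrt (real n)"
        proof -
          have "sqrt 2 \<le> (2::real)" by (rule real_le_lsqrt) auto
          then show ?thesis by (intro mult_right_mono) auto
        qed
        finally have s1: "sqrt (real m) \<le> 2 * sqrt (real n)" .
        have "ln (real m) \<le> ln (2 * real n)" using m2 rmn rn by simp
        also have "\<dots> = ln 2 + ln (real n)" using rn by (simp add: ln_mult)
        also have "\<dots> \<le> 2 * ln (real n)" using rn by simp
        finally have s2: "ln (real m) \<le> 2 * ln (real n)" .
        have lm0: "0 \<le> ln (real m)" using rmn rn by simp
        have "sqrt (real m) * ln (real m) \<le> (2 * sqrt (real n)) * (2 * ln (real n))"
          by (intro mult_mono s1 s2 lm0) auto
        then show ?thesis unfolding sn_def by simp
      qed
      have R: "records \<omega> n = Sc \<omega> m" unfolding m_def using good_records[OF g] Rc_Sc[OF g n0] by simp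
      have split: "real (records \<omega> n) - real n * (1 - q) =
          (real (Sc \<omega> m) - real m * (1 - q)) + (1 - q) * (real m - real n)"
        unfolding R by (simp add: algebra_simps)
      have p1: "(1 - q) * (real m - real n) \<le> real m - real n"
        using q rmn by (simp add: mult_left_le_one_le)
      have p0: "0 \<le> (1 - q) * (real m - real n)" using q rmn by simp
      have t1: "e * sqrt (real m) * ln (real m) \<le> e * (4 * sn)"
        using sm e by (simp add: mult.assoc)
      have t2: "e * (4 * sn) \<le> r / 2 * sn" using e sn0 by simp
      have "\<bar>real (records \<omega> n) - real n * (1 - q)\<bar> < r * sn"
        unfolding split using sc t1 t2 p1 p0 dm h1 by linarith
      then have "\<bar>(real (records \<omega> n) - real n * (1 - q)) / sn\<bar> < r"
        using sn0 by (simp add: abs_div divide_less_eq)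
      then show "norm ((real (records \<omega> n) - real n * (1 - q)) / (sqrt (real n) * ln (real n)) - 0) < r"
        unfolding sn_def by simp
    qed
  qed
qed


lemma det_second:
  fixes R :: "nat \<Rightarrow> real" and p :: real
  assumes f: "(\<lambda>n. (R n - real n * p) / (sqrt (real n) * ln (real n))) \<longlonglongrightarrow> 0"
  shows "(\<lambda>n. R n / real n) \<longlonglongrightarrow> p"
proof -
  have g: "(\<lambda>n::nat. sqrt (real n) * ln (real n) / real n) \<longlonglongrightarrow> 0" by real_asymp
  have "(\<lambda>n. (R n - real n * p) / (sqrt (real n) * ln (real n)) * (sqrt (real n) * ln (real n) / real n) + p)
      \<longlonglongrightarrow> 0 * 0 + p"
    by (intro tendsto_add tendsto_mult f g tendsto_const)
  then have lim: "(\<lambda>n. (R n - real n * p) / (sqrt (real n) * ln (real n)) * (sqrt (real n) * ln (real n) / real n) + p)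
      \<longlonglongrightarrow> p" by simp
  have ev: "eventually (\<lambda>n. (R n - real n * p) / (sqrt (real n) * ln (real n)) * (sqrt (real n) * ln (real n) / real n) + p
      = R n / real n) sequentially"
    using eventually_ge_at_top[of "2::nat"]
  proof (rule eventually_mono)
    fix n :: nat assume n: "2 \<le> n"
    then have rn: "2 \<le> real n" by simp
    then have "0 < ln (real n)" by simp
    then have sn: "sqrt (real n) * ln (real n) \<noteq> 0" using rn by simp
    have rn0: "real n \<noteq> 0" using rn by simp
    show "(R n - real n * p) / (sqrt (real n) * ln (real n)) * (sqrt (real n) * ln (real n) / real n) + p = R n / real n"
      using sn rn0 by (simp add: field_simps)
  qed
  show ?thesis by (rule Lim_transform_eventually[OF lim ev])
qed

theorem lemma2p1:
  fixes q :: real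
  assumes "0 \<le> q" and "q < 1"
  shows "(AE \<omega> in bern_model q.
           (\<lambda>n. (real (records \<omega> n) - real n * (1 - q)) / (sqrt (real n) * ln (real n)))
             \<longlonglongrightarrow> 0) \<and>
         (AE \<omega> in bern_model q. (\<lambda>n. real (records \<omega> n) / real n) \<longlonglongrightarrow> 1 - q)"
proof -
  have q: "0 \<le> q" "q < 1" using assms by auto
  have q1: "q \<le> 1" using q by simp
  have AS: "AE \<omega> in bern_model q. \<forall>k. eventually (\<lambda>N. \<bar>real (Sc \<omega> N) - real N * (1 - q)\<bar>
      < (1 / real (Suc k)) * sqrt (real N) * ln (real N)) sequentially"
    by (subst AE_all_countable) (intro allI AE_Sc[OF q(1) q1]; simp)
  have AG: "AE \<omega> in bern_model q. good \<omega>" by (rule AE_good[OF q])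
  have AZ: "AE \<omega> in bern_model q. eventually (\<lambda>j. \<not> Zev j (Lf q j) \<omega>) sequentially" by (rule AE_Z[OF q])
  have main: "AE \<omega> in bern_model q.
      (\<lambda>n. (real (records \<omega> n) - real n * (1 - q)) / (sqrt (real n) * ln (real n))) \<longlonglongrightarrow> 0"
    using AS AG AZ
  proof eventually_elim
    case (elim \<omega>)
    show ?case by (rule det_main[OF q elim(2) _ elim(3)]) (use elim(1) in blast)
  qed
  moreover have "AE \<omega> in bern_model q. (\<lambda>n. real (records \<omega> n) / real n) \<longlonglongrightarrow> 1 - q"
    using main by eventually_elim (rule det_second)
  ultimately show ?thesis by blast
qed


end
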